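(* For every integer $n\ge 3$, $$Kf(M_n)=\frac{n^{3}-n}{6}+\frac{n^{2}}{\sqrt{3}}\cdot\frac{p^{n}-q^{n}}{p^{n}+q^{n}+2}.$$
   Context: For an integer $n\ge 3$, the Möbius polyomino network $M_n$ is the graph with vertex set $\{1,\dots,n\}\cup\{1',\dots,n'\}$ whose edges are $\{i,i+1\}$ and $\{i',(i+1)'\}$ for $1\le i\le n-1$, $\{i,i'\}$ for $1\le i\le n$, and the two edges $\{1,n'\}$ and $\{1',n\}$. It has $2n$ vertices and $3n$ edges, and every vertex has degree $3$. $p=2+\sqrt3$, $q=2-\sqrt3$. The Kirchhoff index of a connected graph $G$ is $Kf(G)=\sum_{i<j}r_{ij}$, where $r_{ij}$ is the resistance distance between vertices $i$ and $j$; equivalently $Kf(G)=N\sum_{k=2}^{N}1/\mu_k$, where $N=|V(G)|$ and $0=\mu_1<\mu_2\le\dots\le\mu_N$ are the Laplacian eigenvalues of $G$. *)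

theory Defs
  imports Complex_Main
begin

text \<open>A finite simple graph is given by a finite vertex set V and a symmetric,
irreflexive adjacency relation A on V.\<close>

definition laplacian_app :: "'a set \<Rightarrow> ('a \<Rightarrow> 'a \<Rightarrow> bool) \<Rightarrow> ('a \<Rightarrow> real) \<Rightarrow> 'a \<Rightarrow> real" where
  "laplacian_app V A x u = (\<Sum>v\<in>{v\<in>V. A u v}. x u - x v)"

text \<open>Resistance distance between i and j: inject a unit current at i, extract it at j
(i.e. solve L x = e_i - e_j); r_ij is the resulting potential difference x_i - x_j.
For a connected graph this is well defined (equals (e_i-e_j)^T L^+ (e_i-e_j)).\<close>
definition resistance :: "'a set \<Rightarrow> ('a \<Rightarrow> 'a \<Rightarrow> bool) \<Rightarrow> 'a \<Rightarrow> 'a \<Rightarrow> real" where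
  "resistance V A i j =
     (THE r. \<exists>x. (\<forall>u\<in>V. laplacian_app V A x u =
                      (if u = i then 1 else 0) - (if u = j then 1 else 0)) \<and> r = x i - x j)"

text \<open>Kirchhoff index: sum of r_ij over unordered pairs {i,j}, i \<noteq> j
(written as half the ordered double sum; r_ii = 0).\<close>
definition kirchhoff :: "'a set \<Rightarrow> ('a \<Rightarrow> 'a \<Rightarrow> bool) \<Rightarrow> real" where
  "kirchhoff V A = (\<Sum>i\<in>V. \<Sum>j\<in>V. resistance V A i j) / 2"

text \<open>Moebius polyomino network M_n: vertex (i, False) is i, vertex (i, True) is i'.\<close>
definition mob_V :: "nat \<Rightarrow> (nat \<times> bool) set" where
  "mob_V n = {1..n} \<times> (UNIV :: bool set)"

definition mob_adj :: "nat \<Rightarrow> nat \<times> bool \<Rightarrow> nat \<times> bool \<Rightarrow> bool" where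
  "mob_adj n u v \<longleftrightarrow> u \<in> mob_V n \<and> v \<in> mob_V n \<and>
     ((snd u = snd v \<and> (fst v = fst u + 1 \<or> fst u = fst v + 1))
      \<or> (fst u = fst v \<and> snd u \<noteq> snd v)
      \<or> {u, v} = {(1, False), (n, True)}
      \<or> {u, v} = {(1, True), (n, False)})"

end

theory Submission
  imports Defs
begin


definition pp :: real where "pp = 2 + sqrt 3"
definition qq :: real where "qq = 2 - sqrt 3"

lemma pq: "pp * qq = 1" by (simp add: pp_def qq_def algebra_simps)
lemma pp_sq: "pp * pp = 4 * pp - 1" by (simp add: pp_def algebra_simps)
lemma qq_sq: "qq * qq = 4 * qq - 1" by (simp add: qq_def algebra_simps)
lemma pp_pos: "pp > 0" by (simp add: pp_def add_pos_nonneg)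

definition alpha :: "nat \<Rightarrow> nat \<Rightarrow> real" where
  "alpha n j = (real n ^ 2 - 1) / (12 * real n) - real j * (real n - real j) / (2 * real n)"
definition CC :: "nat \<Rightarrow> real" where "CC n = - 1 / (2 * sqrt 3 * (1 + pp ^ n))"
definition beta :: "nat \<Rightarrow> nat \<Rightarrow> real" where
  "beta n j = CC n * (pp ^ j - pp ^ n * qq ^ j)"

lemma alpha_rec: "1 \<le> j \<Longrightarrow> n \<ge> 1 \<Longrightarrow> alpha n (j+1) + alpha n (j-1) = 2 * alpha n j + 1 / real n"
  by (simp add: alpha_def of_nat_diff field_simps)

lemma alpha_n: "alpha n n = alpha n 0" by (simp add: alpha_def)
lemma alpha_n1: "n \<ge> 1 \<Longrightarrow> alpha n (n-1) = alpha n 1" by (simp add: alpha_def of_nat_diff algebra_simps)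
lemma alpha_01: "n \<ge> 1 \<Longrightarrow> 2 * alpha n 0 - 2 * alpha n 1 = 1 - 1 / real n"
  by (simp add: alpha_def field_simps)

lemma beta_rec: "1 \<le> j \<Longrightarrow> beta n (j+1) + beta n (j-1) = 4 * beta n j"
proof -
  assume "1 \<le> j"
  then obtain k where k: "j = Suc k" by (cases j) auto
  have "beta n (j+1) + beta n (j-1) - 4 * beta n j
     = CC n * (pp^k*(pp*pp - 4*pp+1) - pp^n*qq^k*(qq*qq-4*qq+1))"
    by (simp add: beta_def k algebra_simps)
  then show ?thesis by (simp add: pp_sq qq_sq)
qed

lemma pqpow: "pp ^ j * qq ^ j = 1" by (metis pq power_mult_distrib power_one)

lemma beta_n: "beta n n = - beta n 0" by (simp add: beta_def pqpow algebra_simps)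
lemma beta_n1: "n \<ge> 1 \<Longrightarrow> beta n (n-1) = - beta n 1"
proof -
  assume "n \<ge> 1"
  then obtain k where k: "n = Suc k" by (cases n) auto
  have "pp ^ k * qq ^ k = 1" by (rule pqpow)
  then show ?thesis using k pq by (simp add: beta_def algebra_simps)
qed
lemma beta_01: "4 * beta n 0 - 2 * beta n 1 = 1"
proof -
  have "1 + pp ^ n > 0" using pp_pos by (simp add: add_pos_pos)
  then have ne: "1 + pp^n \<noteq> 0" by simp
  have "4 * beta n 0 - 2 * beta n 1 = CC n * ((4 - 2*pp) - pp^n*(4 - 2*qq))"
    by (simp add: beta_def algebra_simps)
  also have "\<dots> = CC n * (-2 * sqrt 3 * (1 + pp^n))" by (simp add: pp_def qq_def algebra_simps)
  also have "\<dots> = 1" using ne by (simp add: CC_def)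
  finally show ?thesis .
qed


definition FF :: "nat \<Rightarrow> nat \<Rightarrow> real" where
  "FF n m = (if m < n then (alpha n m + beta n m)/2 else (alpha n (m-n) - beta n (m-n))/2)"
definition nx :: "nat \<Rightarrow> nat \<Rightarrow> nat" where "nx n k = (if k + 1 = 2*n then 0 else k+1)"
definition pv :: "nat \<Rightarrow> nat \<Rightarrow> nat" where "pv n k = (if k = 0 then 2*n - 1 else k - 1)"
definition op :: "nat \<Rightarrow> nat \<Rightarrow> nat" where "op n k = (if k < n then k + n else k - n)"

lemma comb_p:
  fixes a b ap am bp bm :: real
  assumes "ap + am = 2*a + 1/real n" "bp + bm = 4*b"
  shows "3*((a+b)/2) - (ap+bp)/2 - (am+bm)/2 - (a-b)/2 = -1/(2*real n)"
proof -
  have "3*((a+b)/2) - (ap+bp)/2 - (am+bm)/2 - (a-b)/2 = ((2*a - (ap+am)) + (4*b - (bp+bm)))/2"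
    by (simp add: field_simps)
  also have "\<dots> = -1/(2*real n)" using assms by simp
  finally show ?thesis .
qed

lemma comb_m:
  fixes a b ap am bp bm :: real
  assumes "ap + am = 2*a + 1/real n" "bp + bm = 4*b"
  shows "3*((a-b)/2) - (ap-bp)/2 - (am-bm)/2 - (a+b)/2 = -1/(2*real n)"
proof -
  have "3*((a-b)/2) - (ap-bp)/2 - (am-bm)/2 - (a+b)/2 = ((2*a - (ap+am)) - (4*b - (bp+bm)))/2"
    by (simp add: field_simps)
  also have "\<dots> = -1/(2*real n)" using assms by simp
  finally show ?thesis .
qed

lemma FF_rec:
  assumes n: "n \<ge> 3" and d: "d < 2*n"
  shows "3*FF n d - FF n (nx n d) - FF n (pv n d) - FF n (op n d) = (if d=0 then 1 else 0) - 1/(2*real n)"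
proof -
  have n1: "n \<ge> 1" using n by simp
  have nn: "real n \<noteq> 0" using n by simp
  note a1 = alpha_n alpha_n1[OF n1] beta_n beta_n1[OF n1]
  consider "d = 0" | "0 < d \<and> d < n - 1" | "d = n - 1" | "d = n" | "n < d \<and> d < 2*n-1" | "d = 2*n-1"
    using d n by linarith
  then show ?thesis
  proof cases
    case 1
    have "\<not> 2*n-1<n" "2*n-1-n = n-1" using n by arith+
    then have v: "FF n (2*n-1) = (alpha n 1 + beta n 1)/2" using n1 a1 by (simp add: FF_def)
    have v2: "FF n 0 = (alpha n 0 + beta n 0)/2" "FF n 1 = (alpha n 1 + beta n 1)/2"
      "FF n n = (alpha n 0 - beta n 0)/2" using n by (auto simp: FF_def)
    have "nx n 0 = 1" "pv n 0 = 2*n-1" "op n 0 = n" using n by (auto simp: nx_def pv_def op_def)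
    then have "3*FF n d - FF n (nx n d) - FF n (pv n d) - FF n (op n d)
       = (2*alpha n 0 - 2*alpha n 1)/2 + (4*beta n 0 - 2*beta n 1)/2" using 1 v v2 by (simp add: field_simps)
    also have "\<dots> = (1 - 1/real n)/2 + 1/2" using alpha_01[OF n1] beta_01 by simp
    finally show ?thesis using 1 nn by (simp add: field_simps)
  next
    case 2
    have r: "alpha n (d+1) + alpha n (d-1) = 2 * alpha n d + 1 / real n" "beta n (d+1) + beta n (d-1) = 4 * beta n d"
      using 2 n1 alpha_rec beta_rec by auto
    have e: "nx n d = d+1" "pv n d = d-1" "op n d = d+n" using 2 n by (auto simp: nx_def pv_def op_def)
    have v: "FF n d = (alpha n d + beta n d)/2" "FF n (d+1) = (alpha n (d+1) + beta n (d+1))/2"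
      "FF n (d-1) = (alpha n (d-1) + beta n (d-1))/2" "FF n (d+n) = (alpha n d - beta n d)/2"
      using 2 by (auto simp: FF_def)
    show ?thesis unfolding e v using 2 comb_p[OF r] by simp
  next
    case 3
    have r1: "alpha n (d+1) + alpha n (d-1) = 2 * alpha n d + 1 / real n"
      by (rule alpha_rec, use 3 n in auto)
    have r2: "beta n (d+1) + beta n (d-1) = 4 * beta n d"
      by (rule beta_rec, use 3 n in auto)
    note r = r1 r2
    have e0: "d + 1 = n" using 3 n by simp
    have e: "nx n d = d+1" "pv n d = d-1" "op n d = d+n" using 3 n by (auto simp: nx_def pv_def op_def)
    have v: "FF n d = (alpha n d + beta n d)/2" "FF n (d+1) = (alpha n (d+1) + beta n (d+1))/2"
      "FF n (d-1) = (alpha n (d-1) + beta n (d-1))/2" "FF n (d+n) = (alpha n d - beta n d)/2"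
      using 3 n e0 a1 by (auto simp: FF_def)
    show ?thesis unfolding e v using 3 n comb_p[OF r] by simp
  next
    case 4
    have v: "FF n (n-1) = (alpha n 1 - beta n 1)/2" using n a1 by (simp add: FF_def)
    have v2: "FF n 0 = (alpha n 0 + beta n 0)/2" "FF n (n+1) = (alpha n 1 - beta n 1)/2"
      "FF n n = (alpha n 0 - beta n 0)/2" using n by (auto simp: FF_def)
    have "nx n n = n+1" "pv n n = n-1" "op n n = 0" using n by (auto simp: nx_def pv_def op_def)
    then have "3*FF n d - FF n (nx n d) - FF n (pv n d) - FF n (op n d)
       = (2*alpha n 0 - 2*alpha n 1)/2 - (4*beta n 0 - 2*beta n 1)/2" using 4 v v2 by (simp add: field_simps)
    also have "\<dots> = (1 - 1/real n)/2 - 1/2" using alpha_01[OF n1] beta_01 by simp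
    finally show ?thesis using 4 n nn by (simp add: field_simps)
  next
    case 5
    define j where "j = d - n"
    have j: "0 < j" "j < n - 1" "d = j + n" using 5 j_def by auto
    have r: "alpha n (j+1) + alpha n (j-1) = 2 * alpha n j + 1 / real n" "beta n (j+1) + beta n (j-1) = 4 * beta n j"
      using j n1 alpha_rec beta_rec by auto
    have e: "nx n d = d+1" "pv n d = d-1" "op n d = d-n" using 5 n by (auto simp: nx_def pv_def op_def)
    have v: "FF n (d+1) = (alpha n (j+1) - beta n (j+1))/2" "FF n (d-1) = (alpha n (j-1) - beta n (j-1))/2"
      "FF n d = (alpha n j - beta n j)/2" "FF n (d - n) = (alpha n j + beta n j)/2"
      using j by (auto simp: FF_def)
    show ?thesis unfolding e v using j n comb_m[OF r] by simp
  next
    case 6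
    define j where "j = n - 1"
    have j: "0 < j" "d = j + n" "j + 1 = n" using 6 j_def n by auto
    have r: "alpha n (j+1) + alpha n (j-1) = 2 * alpha n j + 1 / real n" "beta n (j+1) + beta n (j-1) = 4 * beta n j"
      using j n1 alpha_rec beta_rec by auto
    have e: "nx n d = 0" "pv n d = d-1" "op n d = d-n" using 6 n by (auto simp: nx_def pv_def op_def)
    have v: "FF n 0 = (alpha n (j+1) - beta n (j+1))/2" "FF n (d-1) = (alpha n (j-1) - beta n (j-1))/2"
      "FF n d = (alpha n j - beta n j)/2" "FF n (d - n) = (alpha n j + beta n j)/2"
      using j n a1 by (auto simp: FF_def)
    show ?thesis unfolding e v using j n comb_m[OF r] by simp
  qed
qed


definition phi :: "nat \<Rightarrow> nat \<times> bool \<Rightarrow> nat" where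
  "phi n u = fst u - 1 + (if snd u then n else 0)"
definition psi :: "nat \<Rightarrow> nat \<Rightarrow> nat \<times> bool" where
  "psi n k = (if k < n then (k+1, False) else (k-n+1, True))"
definition dd :: "nat \<Rightarrow> nat \<Rightarrow> nat \<Rightarrow> nat" where
  "dd n k c = (if c \<le> k then k - c else k + 2*n - c)"

lemma phi_lt: "u \<in> mob_V n \<Longrightarrow> phi n u < 2*n"
  by (cases u) (auto simp: mob_V_def phi_def)
lemma psi_in: "k < 2*n \<Longrightarrow> psi n k \<in> mob_V n"
  by (auto simp: mob_V_def psi_def)
lemma phi_psi: "k < 2*n \<Longrightarrow> phi n (psi n k) = k"
  by (auto simp: psi_def phi_def)
lemma psi_phi: "u \<in> mob_V n \<Longrightarrow> psi n (phi n u) = u"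
  by (cases u) (auto simp: mob_V_def phi_def psi_def)

lemma adj_iff:
  assumes n: "n \<ge> 3" and u: "u \<in> mob_V n" and v: "v \<in> mob_V n"
  shows "mob_adj n u v \<longleftrightarrow> phi n v = nx n (phi n u) \<or> phi n v = pv n (phi n u) \<or> phi n v = op n (phi n u)"
proof -
  obtain i b where ub: "u = (i,b)" by (cases u)
  obtain j c where vc: "v = (j,c)" by (cases v)
  have ij: "1 \<le> i" "i \<le> n" "1 \<le> j" "j \<le> n" using u v ub vc by (auto simp: mob_V_def)
  show ?thesis using ij n u v unfolding ub vc
    by (cases b; cases c) (auto simp: mob_adj_def phi_def nx_def pv_def op_def doubleton_eq_iff)
qed


lemma nx_lt: "n \<ge> 1 \<Longrightarrow> k < 2*n \<Longrightarrow> nx n k < 2*n" by (auto simp: nx_def)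
lemma pv_lt: "n \<ge> 1 \<Longrightarrow> k < 2*n \<Longrightarrow> pv n k < 2*n" by (auto simp: pv_def)
lemma op_lt: "n \<ge> 1 \<Longrightarrow> k < 2*n \<Longrightarrow> op n k < 2*n" by (auto simp: op_def)

lemma nbrs:
  assumes n: "n \<ge> 3" and u: "u \<in> mob_V n"
  shows "{v \<in> mob_V n. mob_adj n u v} = {psi n (nx n (phi n u)), psi n (pv n (phi n u)), psi n (op n (phi n u))}"
proof -
  have k: "phi n u < 2*n" using phi_lt[OF u] .
  have n1: "n \<ge> 1" using n by simp
  show ?thesis
  proof (rule set_eqI, rule iffI)
    fix v assume "v \<in> {v \<in> mob_V n. mob_adj n u v}"
    then have v: "v \<in> mob_V n" "mob_adj n u v" by auto
    then have "phi n v = nx n (phi n u) \<or> phi n v = pv n (phi n u) \<or> phi n v = op n (phi n u)"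
      using adj_iff[OF n u] by auto
    then show "v \<in> {psi n (nx n (phi n u)), psi n (pv n (phi n u)), psi n (op n (phi n u))}"
      using psi_phi[OF v(1)] by auto
  next
    fix v assume "v \<in> {psi n (nx n (phi n u)), psi n (pv n (phi n u)), psi n (op n (phi n u))}"
    then obtain m where m: "v = psi n m" "m = nx n (phi n u) \<or> m = pv n (phi n u) \<or> m = op n (phi n u)" by auto
    have "m < 2*n" using m(2) nx_lt[OF n1 k] pv_lt[OF n1 k] op_lt[OF n1 k] by auto
    then have "v \<in> mob_V n" "phi n v = m" using m psi_in phi_psi by auto
    then show "v \<in> {v \<in> mob_V n. mob_adj n u v}" using adj_iff[OF n u] m(2) by auto
  qed
qed

lemma lap_formula:
  assumes n: "n \<ge> 3" and u: "u \<in> mob_V n"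
  shows "laplacian_app (mob_V n) (mob_adj n) x u =
    3 * x u - x (psi n (nx n (phi n u))) - x (psi n (pv n (phi n u))) - x (psi n (op n (phi n u)))"
proof -
  define k where "k = phi n u"
  have k: "k < 2*n" using phi_lt[OF u] k_def by simp
  have n1: "n \<ge> 1" using n by simp
  have d: "nx n k \<noteq> pv n k" "nx n k \<noteq> op n k" "pv n k \<noteq> op n k"
    using k n by (auto simp: nx_def pv_def op_def)
  have inj: "\<And>a b. a < 2*n \<Longrightarrow> b < 2*n \<Longrightarrow> psi n a = psi n b \<Longrightarrow> a = b"
    by (metis phi_psi)
  have d2: "psi n (nx n k) \<noteq> psi n (pv n k)" "psi n (nx n k) \<noteq> psi n (op n k)" "psi n (pv n k) \<noteq> psi n (op n k)"
    using d inj nx_lt[OF n1 k] pv_lt[OF n1 k] op_lt[OF n1 k] by metis+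
  show ?thesis unfolding laplacian_app_def nbrs[OF n u] k_def[symmetric]
    using d2 by simp
qed

lemma dd_lt: "k < 2*n \<Longrightarrow> c < 2*n \<Longrightarrow> dd n k c < 2*n" by (auto simp: dd_def)
lemma dd_nx: "n \<ge> 1 \<Longrightarrow> k < 2*n \<Longrightarrow> c < 2*n \<Longrightarrow> dd n (nx n k) c = nx n (dd n k c)"
  by (auto simp: dd_def nx_def)
lemma dd_pv: "n \<ge> 1 \<Longrightarrow> k < 2*n \<Longrightarrow> c < 2*n \<Longrightarrow> dd n (pv n k) c = pv n (dd n k c)"
  by (auto simp: dd_def pv_def)
lemma dd_op: "n \<ge> 1 \<Longrightarrow> k < 2*n \<Longrightarrow> c < 2*n \<Longrightarrow> dd n (op n k) c = op n (dd n k c)"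
  by (auto simp: dd_def op_def)

definition GG :: "nat \<Rightarrow> nat \<times> bool \<Rightarrow> nat \<times> bool \<Rightarrow> real" where
  "GG n w u = FF n (dd n (phi n u) (phi n w))"

lemma GG_lap:
  assumes n: "n \<ge> 3" and u: "u \<in> mob_V n" and w: "w \<in> mob_V n"
  shows "laplacian_app (mob_V n) (mob_adj n) (GG n w) u = (if u = w then 1 else 0) - 1/(2*real n)"
proof -
  have n1: "n \<ge> 1" using n by simp
  define k where "k = phi n u"
  define c where "c = phi n w"
  have k: "k < 2*n" using phi_lt[OF u] k_def by simp
  have c: "c < 2*n" using phi_lt[OF w] c_def by simp
  have e: "\<And>m. m < 2*n \<Longrightarrow> GG n w (psi n m) = FF n (dd n m c)"
    by (simp add: GG_def phi_psi c_def)
  have "laplacian_app (mob_V n) (mob_adj n) (GG n w) u =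
    3 * FF n (dd n k c) - FF n (nx n (dd n k c)) - FF n (pv n (dd n k c)) - FF n (op n (dd n k c))"
    unfolding lap_formula[OF n u] k_def[symmetric]
    using e nx_lt[OF n1 k] pv_lt[OF n1 k] op_lt[OF n1 k] dd_nx[OF n1 k c] dd_pv[OF n1 k c] dd_op[OF n1 k c]
    by (simp add: GG_def k_def c_def)
  also have "\<dots> = (if dd n k c = 0 then 1 else 0) - 1/(2*real n)"
    by (rule FF_rec[OF n dd_lt[OF k c]])
  also have "(dd n k c = 0) = (u = w)"
  proof -
    have "(dd n k c = 0) = (k = c)" using k c by (auto simp: dd_def)
    also have "\<dots> = (u = w)" using psi_phi[OF u] psi_phi[OF w] k_def c_def by metis
    finally show ?thesis .
  qed
  finally show ?thesis .
qed


lemma sum_split_add: "(\<Sum>m<(a::nat)+b. f m) = (\<Sum>m<a. f m) + (\<Sum>m<b. f (a+m))"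
  by (induction b) (simp_all add: algebra_simps)

lemma sum_jj: "(\<Sum>j<m. real j * (real n - real j)) = real m * (real m - 1) * (3 * real n - 2 * real m + 1) / 6"
  by (induction m) (simp_all add: field_simps)

lemma sum_alpha: "n \<ge> 1 \<Longrightarrow> (\<Sum>j<n. alpha n j) = 0"
proof -
  assume n: "n \<ge> 1"
  have "(\<Sum>j<n. alpha n j) = real n * ((real n ^ 2 - 1) / (12 * real n)) - (\<Sum>j<n. real j * (real n - real j)) / (2 * real n)"
    by (simp add: alpha_def sum_subtractf sum_divide_distrib)
  also have "\<dots> = 0" using n unfolding sum_jj by (simp add: field_simps power2_eq_square)
  finally show ?thesis .
qed

lemma sum_FF: "n \<ge> 1 \<Longrightarrow> (\<Sum>m<2*n. FF n m) = 0"
proof -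
  assume n: "n \<ge> 1"
  have "(\<Sum>m<2*n. FF n m) = (\<Sum>m<n+n. FF n m)" by (simp add: mult_2)
  also have "\<dots> = (\<Sum>m<n. FF n m) + (\<Sum>m<n. FF n (n+m))" by (rule sum_split_add)
  also have "\<dots> = (\<Sum>m<n. FF n m + FF n (n+m))" by (simp add: sum.distrib)
  also have "\<dots> = (\<Sum>m<n. alpha n m)" by (rule sum.cong) (auto simp: FF_def field_simps)
  also have "\<dots> = 0" using sum_alpha[OF n] .
  finally show ?thesis .
qed

lemma sum_rot: "c < 2*n \<Longrightarrow> (\<Sum>k<2*n. f (dd n k c)) = (\<Sum>k<2*n. (f k :: real))"
  by (rule sum.reindex_bij_witness[of _ "\<lambda>e. if e + c < 2*n then e+c else e+c-2*n" "\<lambda>k. dd n k c"])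
     (auto simp: dd_def)

lemma sum_V: "(\<Sum>u\<in>mob_V n. g (phi n u)) = (\<Sum>k<2*n. (g k :: real))"
  by (rule sum.reindex_bij_witness[of _ "psi n" "phi n"])
     (auto simp: phi_lt psi_in phi_psi psi_phi)

lemma GG_sum: "n \<ge> 1 \<Longrightarrow> w \<in> mob_V n \<Longrightarrow> (\<Sum>u\<in>mob_V n. GG n w u) = 0"
  unfolding GG_def using sum_V[of "\<lambda>k. FF n (dd n k (phi n w))" n] sum_rot[OF phi_lt, of w n "FF n"] sum_FF
  by simp

lemma GG_self: "w \<in> mob_V n \<Longrightarrow> GG n w w = FF n 0"
  by (simp add: GG_def dd_def)



lemma harmonic_edge:
  fixes V :: "'a set" and A :: "'a \<Rightarrow> 'a \<Rightarrow> bool" and z :: "'a \<Rightarrow> real"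
  assumes fin: "finite V" and sym: "\<And>u v. A u v \<Longrightarrow> A v u"
    and harm: "\<forall>u\<in>V. laplacian_app V A z u = 0"
    and u: "u \<in> V" and v: "v \<in> V" and uv: "A u v"
  shows "z u = z v"
proof -
  define h where "h u v = (if A u v then z u * (z u - z v) else 0)" for u v
  have T0: "(\<Sum>u\<in>V. \<Sum>v\<in>V. h u v) = 0"
  proof -
    have "(\<Sum>u\<in>V. \<Sum>v\<in>V. h u v) = (\<Sum>u\<in>V. z u * laplacian_app V A z u)"
    proof (rule sum.cong[OF refl])
      fix u assume "u \<in> V"
      show "(\<Sum>v\<in>V. h u v) = z u * laplacian_app V A z u"
        unfolding laplacian_app_def sum.inter_filter[OF fin] sum_distrib_left h_def
        by (rule sum.cong) auto
    qed
    also have "\<dots> = 0" using harm by simp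
    finally show ?thesis .
  qed
  have "(\<Sum>u\<in>V. \<Sum>v\<in>V. (if A u v then (z u - z v)^2 else 0)) = (\<Sum>u\<in>V. \<Sum>v\<in>V. h u v + h v u)"
  proof (rule sum.cong[OF refl], rule sum.cong[OF refl])
    fix u v
    show "(if A u v then (z u - z v)^2 else 0) = h u v + h v u"
    proof (cases "A u v")
      case True
      then have "A v u" by (rule sym)
      then show ?thesis using True by (simp add: h_def power2_eq_square algebra_simps)
    next
      case False
      then have "\<not> A v u" using sym by blast
      then show ?thesis using False by (simp add: h_def)
    qed
  qed
  also have "\<dots> = (\<Sum>u\<in>V. \<Sum>v\<in>V. h u v) + (\<Sum>u\<in>V. \<Sum>v\<in>V. h v u)" by (simp add: sum.distrib)
  also have "(\<Sum>u\<in>V. \<Sum>v\<in>V. h v u) = (\<Sum>u\<in>V. \<Sum>v\<in>V. h u v)" by (rule sum.swap)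
  finally have S: "(\<Sum>u\<in>V. \<Sum>v\<in>V. (if A u v then (z u - z v)^2 else 0)) = 0" using T0 by simp
  have nn: "\<forall>u\<in>V. 0 \<le> (\<Sum>v\<in>V. (if A u v then (z u - z v)^2 else 0))"
    by (auto intro: sum_nonneg)
  have "(\<Sum>v\<in>V. (if A u v then (z u - z v)^2 else 0)) = 0"
    using sum_nonneg_eq_0_iff[OF fin, of "\<lambda>u. \<Sum>v\<in>V. (if A u v then (z u - z v)^2 else 0)"] nn S u
    by simp
  then have "(if A u v then (z u - z v)^2 else 0) = 0"
    using sum_nonneg_eq_0_iff[OF fin, of "\<lambda>v. if A u v then (z u - z v)^2 else 0"] v by auto
  then show ?thesis using uv by simp
qed



lemma mob_fin: "finite (mob_V n)" by (simp add: mob_V_def)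
lemma mob_sym: "mob_adj n u v \<Longrightarrow> mob_adj n v u" unfolding mob_adj_def by (metis insert_commute)

lemma mob_const:
  assumes n: "n \<ge> 3" and harm: "\<forall>u\<in>mob_V n. laplacian_app (mob_V n) (mob_adj n) z u = 0"
  shows "\<forall>u\<in>mob_V n. z u = z (1, False)"
proof -
  have E: "\<And>u v. u \<in> mob_V n \<Longrightarrow> v \<in> mob_V n \<Longrightarrow> mob_adj n u v \<Longrightarrow> z u = z v"
    by (rule harmonic_edge[OF mob_fin mob_sym harm])
  have "\<forall>i. 1 \<le> i \<longrightarrow> i \<le> n \<longrightarrow> z (i, False) = z (1, False) \<and> z (i, True) = z (1, False)"
  proof (intro allI)
    fix i show "1 \<le> i \<longrightarrow> i \<le> n \<longrightarrow> z (i, False) = z (1, False) \<and> z (i, True) = z (1, False)"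
    proof (induction i)
      case 0 then show ?case by simp
    next
      case (Suc i)
      show ?case
      proof (intro impI)
        assume a: "1 \<le> Suc i" "Suc i \<le> n"
        show "z (Suc i, False) = z (1, False) \<and> z (Suc i, True) = z (1, False)"
        proof (cases "i = 0")
          case True
          have "(1,True) \<in> mob_V n" "(1,False) \<in> mob_V n"
            using n by (simp_all add: mob_V_def)
          moreover have "mob_adj n (1,True) (1,False)"
            using adj_iff[OF n calculation] n by (simp add: phi_def nx_def pv_def op_def)
          ultimately have "z (1, True) = z (1, False)" using E by blast
          then show ?thesis using True by simp
        next
          case False
          then have ih: "z (i, False) = z (1, False)" "z (i, True) = z (1, False)" using Suc a by auto
          have m: "(Suc i, b) \<in> mob_V n" "(i, b) \<in> mob_V n" for b
            using a False by (simp_all add: mob_V_def)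
          have ad: "mob_adj n (Suc i, b) (i, b)" for b
          proof -
            have "phi n (i,b) = pv n (phi n (Suc i, b))" using False by (simp add: phi_def pv_def)
            then show ?thesis apply (subst adj_iff[OF n m(1)[of b] m(2)[of b]]) by (rule disjI2, rule disjI1)
          qed
          have "z (Suc i, False) = z (i, False)" "z (Suc i, True) = z (i, True)"
            using E[OF m ad] by auto
          then show ?thesis using ih by simp
        qed
      qed
    qed
  qed
  note all = this
  show ?thesis
  proof
    fix u assume u: "u \<in> mob_V n"
    obtain i b where ub: "u = (i, b)" by (cases u)
    have i: "1 \<le> i" "i \<le> n" using u ub by (auto simp: mob_V_def)
    have "z (i, False) = z (1, False) \<and> z (i, True) = z (1, False)" using all i by blast
    then show "z u = z (1, False)" using ub by (cases b) simp_all
  qed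
qed


lemma lap_diff: "laplacian_app V A (\<lambda>u. x u - y u) u = laplacian_app V A x u - laplacian_app V A y u"
  unfolding laplacian_app_def sum_subtractf[symmetric] by (rule sum.cong) auto

lemma resist:
  assumes n: "n \<ge> 3" and i: "i \<in> mob_V n" and j: "j \<in> mob_V n"
    and x0: "\<forall>u\<in>mob_V n. laplacian_app (mob_V n) (mob_adj n) x0 u = (if u = i then 1 else 0) - (if u = j then 1 else 0)"
  shows "resistance (mob_V n) (mob_adj n) i j = x0 i - x0 j"
  unfolding resistance_def
proof (rule the_equality)
  show "\<exists>x. (\<forall>u\<in>mob_V n. laplacian_app (mob_V n) (mob_adj n) x u = (if u = i then 1 else 0) - (if u = j then 1 else 0)) \<and> x0 i - x0 j = x i - x j"
    using x0 by blast
next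
  fix r assume "\<exists>x. (\<forall>u\<in>mob_V n. laplacian_app (mob_V n) (mob_adj n) x u = (if u = i then 1 else 0) - (if u = j then 1 else 0)) \<and> r = x i - x j"
  then obtain x where x: "\<forall>u\<in>mob_V n. laplacian_app (mob_V n) (mob_adj n) x u = (if u = i then 1 else 0) - (if u = j then 1 else 0)"
    and r: "r = x i - x j" by blast
  have "\<forall>u\<in>mob_V n. laplacian_app (mob_V n) (mob_adj n) (\<lambda>u. x u - x0 u) u = 0"
    using x x0 by (simp add: lap_diff)
  then have "\<forall>u\<in>mob_V n. x u - x0 u = x (1,False) - x0 (1,False)" by (rule mob_const[OF n])
  then have "x i - x0 i = x j - x0 j" using i j by simp
  then show "r = x0 i - x0 j" using r by simp
qed

lemma res_GG:
  assumes n: "n \<ge> 3" and i: "i \<in> mob_V n" and j: "j \<in> mob_V n"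
  shows "resistance (mob_V n) (mob_adj n) i j = 2 * FF n 0 - GG n j i - GG n i j"
proof -
  have "resistance (mob_V n) (mob_adj n) i j = (GG n i i - GG n j i) - (GG n i j - GG n j j)"
    using resist[OF n i j, of "\<lambda>u. GG n i u - GG n j u"] GG_lap[OF n _ i] GG_lap[OF n _ j]
    by (simp add: lap_diff)
  then show ?thesis using GG_self i j by simp
qed

lemma card_V: "card (mob_V n) = 2 * n" by (simp add: mob_V_def card_cartesian_product)

lemma kf_FF:
  assumes n: "n \<ge> 3"
  shows "kirchhoff (mob_V n) (mob_adj n) = 4 * real n ^ 2 * FF n 0"
proof -
  have n1: "n \<ge> 1" using n by simp
  have "(\<Sum>i\<in>mob_V n. \<Sum>j\<in>mob_V n. resistance (mob_V n) (mob_adj n) i j)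
      = (\<Sum>i\<in>mob_V n. \<Sum>j\<in>mob_V n. 2 * FF n 0 - GG n j i - GG n i j)"
    by (intro sum.cong refl) (simp add: res_GG[OF n])
  also have "\<dots> = (\<Sum>i\<in>mob_V n. \<Sum>j\<in>mob_V n. 2 * FF n 0) - (\<Sum>i\<in>mob_V n. \<Sum>j\<in>mob_V n. GG n j i)
      - (\<Sum>i\<in>mob_V n. \<Sum>j\<in>mob_V n. GG n i j)"
    by (simp add: sum_subtractf)
  also have "(\<Sum>i\<in>mob_V n. \<Sum>j\<in>mob_V n. GG n i j) = 0"
    using GG_sum[OF n1] by simp
  also have "(\<Sum>i\<in>mob_V n. \<Sum>j\<in>mob_V n. GG n j i) = (\<Sum>j\<in>mob_V n. \<Sum>i\<in>mob_V n. GG n j i)"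
    by (rule sum.swap)
  also have "\<dots> = 0"
    using GG_sum[OF n1] by simp
  also have "(\<Sum>i\<in>mob_V n. \<Sum>j\<in>mob_V n. 2 * FF n 0) = real (2*n) * real (2*n) * (2 * FF n 0)"
    by (simp add: card_V)
  finally show ?thesis unfolding kirchhoff_def by (simp add: power2_eq_square)
qed

lemma final_alg:
  assumes n: "n \<ge> 3"
  shows "4 * real n ^ 2 * FF n 0 = (real n ^ 3 - real n) / 6
           + (real n ^ 2 / sqrt 3) * ((pp ^ n - qq ^ n) / (pp ^ n + qq ^ n + 2))"
proof -
  define P where "P = pp ^ n"
  have P: "P > 0" using pp_pos P_def by simp
  have Q: "qq ^ n = 1 / P" using pqpow[of n] P pp_pos unfolding P_def by (simp add: eq_divide_eq mult.commute)
  have s: "sqrt 3 > 0" by simp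
  have "FF n 0 = (alpha n 0 + beta n 0) / 2" using n by (simp add: FF_def)
  also have "\<dots> = ((real n ^ 2 - 1) / (12 * real n) + (P - 1) / (2 * sqrt 3 * (1 + P))) / 2"
  proof -
    have X: "2 * sqrt 3 * (1 + P) \<noteq> 0" using P s by simp
    have "beta n 0 = CC n * (1 - P)" by (simp add: beta_def P_def)
    also have "\<dots> = (P - 1) / (2 * sqrt 3 * (1 + P))"
      unfolding CC_def P_def[symmetric] using X by (simp add: field_simps)
    finally show ?thesis by (simp add: alpha_def)
  qed
  finally have F: "FF n 0 = \<dots>" .
  have e: "(P - 1 / P) / (P + 1 / P + 2) = (P - 1) / (P + 1)"
  proof -
    have a: "P - 1/P = (P-1)*(P+1)/P" using P by (simp add: field_simps algebra_simps)
    have b: "P + 1/P + 2 = (P+1)*(P+1)/P" using P by (simp add: field_simps algebra_simps)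
    have "P + 1 \<noteq> 0" "P \<noteq> 0" using P by auto
    then show ?thesis unfolding a b by simp
  qed
  have t1: "2 * real n^2 * ((real n^2-1)/(12*real n)) = (real n^3 - real n)/6"
    using n by (simp add: field_simps power2_eq_square power3_eq_cube)
  have X: "1 + P \<noteq> 0" "P + 1 \<noteq> 0" using P by auto
  have t2: "2 * real n^2 * ((P-1)/(2*sqrt 3*(1+P))) = (real n^2/sqrt 3)*((P-1)/(P+1))"
  proof -
    have "2 * real n^2 * ((P-1)/(2*sqrt 3*(1+P))) = real n^2 * (P-1) / (sqrt 3 * (P+1))"
      by (simp add: add.commute)
    also have "\<dots> = (real n^2/sqrt 3)*((P-1)/(P+1))" by simp
    finally show ?thesis .
  qed
  have "4 * real n ^ 2 * FF n 0 = 2 * real n^2 * ((real n^2-1)/(12*real n)) + 2 * real n^2 * ((P-1)/(2*sqrt 3*(1+P)))"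
    unfolding F by (simp add: algebra_simps)
  then show ?thesis unfolding Q P_def[symmetric] e t1 t2 .
qed

theorem theorem3p3:
  fixes n :: nat
  assumes "n \<ge> 3"
  shows "kirchhoff (mob_V n) (mob_adj n) =
           (real n ^ 3 - real n) / 6
           + (real n ^ 2 / sqrt 3) *
             (((2 + sqrt 3) ^ n - (2 - sqrt 3) ^ n) / ((2 + sqrt 3) ^ n + (2 - sqrt 3) ^ n + 2))"
  using kf_FF[OF assms] final_alg[OF assms] by (simp add: pp_def qq_def)

end
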